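(* Consider the distributed detection model in the context and suppose $\alpha>\frac{1}{P_{0,1}+P_{1,0}}$ (so that $\pi_{1,1}<\pi_{1,0}$), with $0<\pi_{1,0},\pi_{1,1}<1$. Let $k=\sum_{i=1}^N u_i$ be the number of received ones. Then the MAP (error-probability-minimizing) fusion rule decides $H_0$ if $k>T'$ and $H_1$ if $k<T'$, where $$T'=\frac{\ln\left[\frac{P_1}{P_0}\left(\frac{1-\pi_{1,1}}{1-\pi_{1,0}}\right)^{N}\right]}{\ln\frac{\pi_{1,0}}{\pi_{1,1}}+\ln\frac{1-\pi_{1,1}}{1-\pi_{1,0}}}.$$
   Context: Binary hypothesis test between $H_0$ and $H_1$ with priors $P_0,P_1\in(0,1)$, $P_0+P_1=1$. There are $N$ sensors, each using the same fixed local threshold, so that conditionally on the hypothesis their local decisions $v_i\in\{0,1\}$ are i.i.d. with $P(v_i=1\mid H_1)=P_d$, $P(v_i=1\mid H_0)=P_f$, where $0<P_f<P_d<1$. Each sensor independently is Byzantine with probability $\alpha\in[0,1]$. Honest nodes send $u_i=v_i$; a Byzantine node sends $u_i=1$ with probability $P_{1,0}$ when $v_i=0$ and sends $u_i=0$ with probability $P_{0,1}$ when $v_i=1$. Hence conditionally on $H_j$ the $u_i$ are i.i.d. with $P(u_i=1\mid H_0)=\pi_{1,0}=\alpha(P_{1,0}(1-P_f)+(1-P_{0,1})P_f)+(1-\alpha)P_f$ and $P(u_i=1\mid H_1)=\pi_{1,1}=\alpha(P_{1,0}(1-P_d)+(1-P_{0,1})P_d)+(1-\alpha)P_d$. The fusion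 center knows $(\alpha,P_{1,0},P_{0,1})$ and the MAP rule decides $H_1$ when $P(\mathbf u\mid H_1)/P(\mathbf u\mid H_0)>P_0/P_1$ and $H_0$ when it is $<P_0/P_1$. *)

theory Defs
  imports Complex_Main
begin

text \<open>Probability that a transmitted bit is 1 under H0 (pi_{1,0}) and under H1 (pi_{1,1}).\<close>
definition pi10 :: "real \<Rightarrow> real \<Rightarrow> real \<Rightarrow> real \<Rightarrow> real" where
  "pi10 \<alpha> P10 P01 Pf = \<alpha> * (P10 * (1 - Pf) + (1 - P01) * Pf) + (1 - \<alpha>) * Pf"

definition pi11 :: "real \<Rightarrow> real \<Rightarrow> real \<Rightarrow> real \<Rightarrow> real" where
  "pi11 \<alpha> P10 P01 Pd = \<alpha> * (P10 * (1 - Pd) + (1 - P01) * Pd) + (1 - \<alpha>) * Pd"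

definition likelihood :: "nat \<Rightarrow> (nat \<Rightarrow> nat) \<Rightarrow> real \<Rightarrow> real" where
  "likelihood N u p = (\<Prod>i<N. if u i = 1 then p else 1 - p)"

text \<open>MAP fusion rule: Some True = decide H1, Some False = decide H0, None = tie.\<close>
definition map_rule :: "real \<Rightarrow> real \<Rightarrow> real \<Rightarrow> real \<Rightarrow> bool option" where
  "map_rule P0 P1 LH0 LH1 =
     (if LH1 / LH0 > P0 / P1 then Some True
      else if LH1 / LH0 < P0 / P1 then Some False else None)"

end

theory Submission
  imports Defs
begin

lemma lik_sum:
  assumes "\<forall>i<N. u i \<in> {0, 1}"
  shows "(\<Sum>i<N. u i) \<le> N \<and> likelihood N u p = p ^ (\<Sum>i<N. u i) * (1 - p) ^ (N - (\<Sum>i<N. u i))"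
  using assms
proof (induction N)
  case 0 then show ?case by (simp add: likelihood_def)
next
  case (Suc N)
  then have IH: "(\<Sum>i<N. u i) \<le> N" "likelihood N u p = p ^ (\<Sum>i<N. u i) * (1 - p) ^ (N - (\<Sum>i<N. u i))" by auto
  have uN: "u N \<in> {0,1}" using Suc.prems by auto
  have L: "likelihood (Suc N) u p = likelihood N u p * (if u N = 1 then p else 1 - p)"
    by (simp add: likelihood_def)
  show ?case
  proof (cases "u N = 1")
    case True
    then show ?thesis using IH L by (simp add: algebra_simps)
  next
    case False
    then have "u N = 0" using uN by auto
    moreover have "Suc N - (\<Sum>i<N. u i) = Suc (N - (\<Sum>i<N. u i))" using IH by simp
    ultimately show ?thesis using IH L by (simp add: algebra_simps)
  qed
qed

theorem lemma5:
  fixes N :: nat and u :: "nat \<Rightarrow> nat"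
    and P0 P1 Pd Pf \<alpha> P10 P01 :: real
  assumes "0 < P0" "P0 < 1" "0 < P1" "P1 < 1" "P0 + P1 = 1"
    and "0 < Pf" "Pf < Pd" "Pd < 1"
    and "0 \<le> \<alpha>" "\<alpha> \<le> 1"
    and "0 \<le> P10" "P10 \<le> 1" "0 \<le> P01" "P01 \<le> 1"
    and "P01 + P10 > 0" "\<alpha> > 1 / (P01 + P10)"
    and "0 < pi10 \<alpha> P10 P01 Pf" "pi10 \<alpha> P10 P01 Pf < 1"
    and "0 < pi11 \<alpha> P10 P01 Pd" "pi11 \<alpha> P10 P01 Pd < 1"
    and "\<forall>i<N. u i \<in> {0, 1}"
  shows "let p0 = pi10 \<alpha> P10 P01 Pf; p1 = pi11 \<alpha> P10 P01 Pd;
             k = (\<Sum>i<N. u i);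
             T' = ln ((P1 / P0) * ((1 - p1) / (1 - p0)) ^ N)
                  / (ln (p0 / p1) + ln ((1 - p1) / (1 - p0)));
             d = map_rule P0 P1 (likelihood N u p0) (likelihood N u p1)
         in (real k > T' \<longrightarrow> d = Some False) \<and> (real k < T' \<longrightarrow> d = Some True)"
proof -
  define p0 where "p0 = pi10 \<alpha> P10 P01 Pf"
  define p1 where "p1 = pi11 \<alpha> P10 P01 Pd"
  define k where "k = (\<Sum>i<N. u i)"
  have p0: "0 < p0" "p0 < 1" and p1: "0 < p1" "p1 < 1" using assms p0_def p1_def by auto
  have "\<alpha> * (P01 + P10) > 1" using assms(15,16) by (simp add: field_simps)
  moreover have "p1 - p0 = (Pd - Pf) * (1 - \<alpha> * (P01 + P10))"
    unfolding p0_def p1_def pi10_def pi11_def by (simp add: algebra_simps)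
  ultimately have "p1 - p0 < 0" using assms(7) by (simp add: mult_pos_neg)
  hence lt: "p1 < p0" by simp
  obtain kl: "k \<le> N" and L0: "likelihood N u p0 = p0 ^ k * (1 - p0) ^ (N - k)"
    using lik_sum[OF assms(21)] k_def by blast
  have L1: "likelihood N u p1 = p1 ^ k * (1 - p1) ^ (N - k)"
    using lik_sum[OF assms(21)] k_def by blast
  define a where "a = ln (p0 / p1)"
  define b where "b = ln ((1 - p1) / (1 - p0))"
  have a: "a > 0" unfolding a_def using p0 p1 lt by simp
  have b: "b > 0" unfolding b_def using p0 p1 lt by simp
  define R where "R = likelihood N u p1 / likelihood N u p0"
  have Rpos: "R > 0" unfolding R_def L0 L1 using p0 p1 by simp
  have lnR: "ln R = real k * (- a) + real (N - k) * b"
    unfolding R_def L0 L1 a_def b_def using p0 p1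
    by (simp add: ln_mult ln_div ln_realpow algebra_simps)
  have T: "ln ((P1 / P0) * ((1 - p1) / (1 - p0)) ^ N) = ln (P1/P0) + real N * b"
  proof -
    have "(1 - p1) / (1 - p0) > 0" using p0 p1 by simp
    moreover have "P1/P0 > 0" using assms(1,3) by simp
    ultimately show ?thesis unfolding b_def
      using ln_mult[of "P1/P0" "((1 - p1) / (1 - p0)) ^ N"] ln_realpow p0 p1 assms(1,3) by simp
  qed
  have cmp: "R > P0/P1 \<longleftrightarrow> ln R > ln (P0/P1)" "R < P0/P1 \<longleftrightarrow> ln R < ln (P0/P1)"
    using Rpos assms(1,3) by simp_all
  have lnP: "ln (P0/P1) = - ln (P1/P0)" using assms(1,3) by (simp add: ln_div)
  have kN: "real (N - k) = real N - real k" using kl by simp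
  show ?thesis
    unfolding Let_def p0_def[symmetric] p1_def[symmetric] k_def[symmetric]
      a_def[symmetric] b_def[symmetric] T map_rule_def R_def[symmetric]
  proof (intro conjI impI)
    assume "real k > (ln (P1/P0) + real N * b) / (a + b)"
    hence h: "real k * (a + b) > ln (P1/P0) + real N * b" using a b by (simp add: field_simps)
    hence "ln R < ln (P0/P1)" using lnR lnP kN by (simp add: algebra_simps)
    moreover have "\<not> ln R > ln (P0/P1)" using calculation by simp
    ultimately show "(if P0 / P1 < R then Some True else if R < P0 / P1 then Some False else None) = Some False"
      using cmp by simp
  next
    assume "real k < (ln (P1/P0) + real N * b) / (a + b)"
    hence h: "real k * (a + b) < ln (P1/P0) + real N * b" using a b by (simp add: field_simps)
    hence "ln R > ln (P0/P1)" using lnR lnP kN by (simp add: algebra_simps)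
    then show "(if P0 / P1 < R then Some True else if R < P0 / P1 then Some False else None) = Some True"
      using cmp by simp
  qed
qed

end
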